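(* For every integer $k\ge 2$ and every $n\ge 0$, the number of edges of the $k$-Pell graph $\Pi_{n,k}$ is $$|E(\Pi_{n,k})|=\sum_{i=0}^{n}F_{i,k}\left(F_{n-i+2,k}-F_{n-i+1,k}\right).$$
   Context: For a positive integer $k$, the $k$-Fibonacci numbers are defined by $F_{0,k}=0$, $F_{1,k}=1$ and $F_{n,k}=kF_{n-1,k}+F_{n-2,k}$ for $n\ge 2$. For an integer $k\ge 2$, a $k$-Pell string is a finite word over the alphabet $\{0,1,\ldots,k-1,kk\}$, i.e. a word over $\{0,1,\ldots,k\}$ in which every maximal run of the letter $k$ has even length. For $n\ge 0$, the $k$-Pell graph $\Pi_{n,k}$ has as vertices all $k$-Pell strings of length $n$, and two vertices are adjacent if one is obtained from the other either by replacing a single letter $i$ by $i+1$ (or vice versa) for some $i\in\{0,1,\ldots,k-2\}$, or by replacing one factor $(k-1)(k-1)$ by $kk$ (or vice versa), in such a way that the resulting string is again a $k$-Pell string. *)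

theory Defs
  imports Main
begin

fun kfib :: "nat \<Rightarrow> nat \<Rightarrow> nat" where
  "kfib k 0 = 0"
| "kfib k (Suc 0) = 1"
| "kfib k (Suc (Suc n)) = k * kfib k (Suc n) + kfib k n"

text \<open>k-Pell strings: words over the alphabet 0,1,...,k-1 and the double letter kk,
  represented as lists of naturals over 0..k.\<close>
fun pell_string :: "nat \<Rightarrow> nat list \<Rightarrow> bool" where
  "pell_string k [] = True"
| "pell_string k [a] = (a < k)"
| "pell_string k (a # b # w) =
     (if a < k then pell_string k (b # w)
      else a = k \<and> b = k \<and> pell_string k w)"

definition pell_vertices :: "nat \<Rightarrow> nat \<Rightarrow> nat list set" where
  "pell_vertices n k = {w. length w = n \<and> pell_string k w}"

definition pell_step :: "nat \<Rightarrow> nat list \<Rightarrow> nat list \<Rightarrow> bool" where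
  "pell_step k u v \<longleftrightarrow>
     (\<exists>x a y. u = x @ [a] @ y \<and> v = x @ [Suc a] @ y \<and> a \<le> k - 2)
   \<or> (\<exists>x y. u = x @ [k - 1, k - 1] @ y \<and> v = x @ [k, k] @ y)"

definition pell_edges :: "nat \<Rightarrow> nat \<Rightarrow> nat list set set" where
  "pell_edges n k = {{u, v} | u v. u \<in> pell_vertices n k \<and> v \<in> pell_vertices n k
                                   \<and> pell_step k u v}"

end

theory Submission
  imports Defs
begin

fun st :: "nat \<Rightarrow> nat list \<Rightarrow> nat list \<Rightarrow> bool" where
  "st k (a#w) (b#w') = ((a = b \<and> st k w w') \<or> (b = Suc a \<and> a \<le> k - 2 \<and> w = w')
      \<or> (a = k - 1 \<and> b = k \<and> (\<exists>y. w = (k-1)#y \<and> w' = k#y)))"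
| "st k _ _ = False"

lemma st_imp_step: "st k u v \<Longrightarrow> pell_step k u v"
proof (induction k u v rule: st.induct)
  case (1 k a w b w')
  from "1.prems" consider "a = b" "st k w w'" | "b = Suc a" "a \<le> k - 2" "w = w'"
    | y where "a = k - 1" "b = k" "w = (k-1)#y" "w' = k#y" by auto
  then show ?case
  proof cases
    case 1
    then have "pell_step k w w'" using "1.IH" by simp
    then show ?thesis unfolding pell_step_def using 1
      by (metis append_Cons)
  next
    case 2
    then show ?thesis unfolding pell_step_def
      by (metis append.simps(1) append.simps(2))
  next
    case 3
    then show ?thesis unfolding pell_step_def
      by (metis append.simps(1) append.simps(2))
  qed
qed auto

lemma step_imp_st: "pell_step k u v \<Longrightarrow> st k u v"
proof -
  have A: "st k (x @ [a] @ y) (x @ [Suc a] @ y)" if "a \<le> k - 2" for x a y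
    using that by (induction x) auto
  have B: "st k (x @ [k-1, k-1] @ y) (x @ [k, k] @ y)" for x y
    by (induction x) auto
  assume "pell_step k u v"
  then show ?thesis unfolding pell_step_def using A B by auto
qed

lemma st_sum: "k \<ge> 1 \<Longrightarrow> st k u v \<Longrightarrow> sum_list u < sum_list v"
  by (induction k u v rule: st.induct) auto

lemma pell_tl: "a < k \<Longrightarrow> pell_string k (a#w) \<Longrightarrow> pell_string k w"
  by (cases w) auto

lemma pell_cons: "a < k \<Longrightarrow> pell_string k w \<Longrightarrow> pell_string k (a#w)"
  by (cases w) auto

definition P :: "nat \<Rightarrow> nat \<Rightarrow> (nat list \<times> nat list) set" where
  "P k n = {(u,v). u \<in> pell_vertices n k \<and> v \<in> pell_vertices n k \<and> st k u v}"

lemma edges_P: assumes "k \<ge> 1" shows "card (pell_edges n k) = card (P k n)"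
proof -
  have "pell_edges n k = (\<lambda>(u,v). {u,v}) ` P k n"
  proof (intro set_eqI iffI)
    fix e assume "e \<in> pell_edges n k"
    then obtain u v where "e = {u,v}" "u \<in> pell_vertices n k" "v \<in> pell_vertices n k"
      "pell_step k u v" unfolding pell_edges_def by blast
    then have "(u,v) \<in> P k n" "e = (\<lambda>(u,v). {u,v}) (u,v)"
      unfolding P_def using step_imp_st by auto
    then show "e \<in> (\<lambda>(u,v). {u,v}) ` P k n" by blast
  next
    fix e assume "e \<in> (\<lambda>(u,v). {u,v}) ` P k n"
    then obtain u v where "e = {u,v}" "u \<in> pell_vertices n k" "v \<in> pell_vertices n k"
      "st k u v" unfolding P_def by auto
    then show "e \<in> pell_edges n k" unfolding pell_edges_def using st_imp_step by blast
  qed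
  moreover have "inj_on (\<lambda>(u,v). {u,v}) (P k n)"
  proof (rule inj_onI, clarify)
    fix u v u' v'
    assume "(u,v) \<in> P k n" "(u',v') \<in> P k n" "{u,v} = {u',v'}"
    then have "st k u v" "st k u' v'" by (auto simp: P_def)
    then have "sum_list u < sum_list v" "sum_list u' < sum_list v'" using st_sum assms by auto
    then show "u = u' \<and> v = v'" using \<open>{u,v} = {u',v'}\<close>
      by (metis doubleton_eq_iff less_asym)
  qed
  ultimately show ?thesis by (simp add: card_image)
qed

lemma V0: "pell_vertices 0 k = {[]}"
  by (auto simp: pell_vertices_def)

lemma V1: "pell_vertices (Suc 0) k = (\<lambda>a. [a]) ` {..<k}"
  by (auto simp: pell_vertices_def length_Suc_conv)

lemma len2: "length x = Suc (Suc n) \<Longrightarrow> \<exists>a b w. x = a#b#w \<and> length w = n"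
  by (metis length_Suc_conv)

lemma VSS: "pell_vertices (Suc (Suc n)) k =
   (\<lambda>(a,w). a#w) ` ({..<k} \<times> pell_vertices (Suc n) k) \<union> (\<lambda>w. k#k#w) ` pell_vertices n k"
proof (intro set_eqI iffI)
  fix x assume x: "x \<in> pell_vertices (Suc (Suc n)) k"
  then obtain a b w where xe: "x = a#b#w" "length w = n" using len2 unfolding pell_vertices_def by blast
  show "x \<in> (\<lambda>(a,w). a#w) ` ({..<k} \<times> pell_vertices (Suc n) k) \<union> (\<lambda>w. k#k#w) ` pell_vertices n k"
  proof (cases "a < k")
    case True
    then have "(a, b#w) \<in> {..<k} \<times> pell_vertices (Suc n) k" using x xe by (auto simp: pell_vertices_def)
    then show ?thesis using xe by force
  next
    case False
    then have "w \<in> pell_vertices n k" "a = k" "b = k" using x xe by (auto simp: pell_vertices_def)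
    then show ?thesis using xe by blast
  qed
next
  fix x assume "x \<in> (\<lambda>(a,w). a#w) ` ({..<k} \<times> pell_vertices (Suc n) k) \<union> (\<lambda>w. k#k#w) ` pell_vertices n k"
  then show "x \<in> pell_vertices (Suc (Suc n)) k"
    by (auto simp: pell_vertices_def length_Suc_conv)
qed

lemma V_finite: "finite (pell_vertices n k)"
proof (induction n rule: nat_less_induct)
  case (1 n)
  consider "n = 0" | "n = Suc 0" | m where "n = Suc (Suc m)" by (metis not0_implies_Suc)
  then show ?case
  proof cases
    case 3
    then show ?thesis using 1 by (simp add: VSS)
  qed (auto simp: V0 V1)
qed

lemma V_card: "card (pell_vertices n k) = kfib k (Suc n)"
proof (induction n rule: nat_less_induct)
  case (1 n)
  consider "n = 0" | "n = Suc 0" | m where "n = Suc (Suc m)" by (metis not0_implies_Suc)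
  then show ?case
  proof cases
    case 1 then show ?thesis by (simp add: V0)
  next
    case 2 then show ?thesis by (simp add: V1 card_image inj_on_def)
  next
    case 3
    have i1: "inj_on (\<lambda>(a,w). a#w) ({..<k} \<times> pell_vertices (Suc m) k)" by (auto simp: inj_on_def)
    have i2: "inj_on (\<lambda>w. k#k#w) (pell_vertices m k)" by (auto simp: inj_on_def)
    have d: "(\<lambda>(a,w). a#w) ` ({..<k} \<times> pell_vertices (Suc m) k) \<inter> (\<lambda>w. k#k#w) ` pell_vertices m k = {}"
      by auto
    have "card (pell_vertices n k) = k * card (pell_vertices (Suc m) k) + card (pell_vertices m k)"
      unfolding 3 VSS
      by (subst card_Un_disjoint) (auto simp: d V_finite card_image[OF i1] card_image[OF i2] card_cartesian_product)
    then show ?thesis using "1.IH" 3 by simp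
  qed
qed


lemma P0: "P k 0 = {}"
  by (auto simp: P_def pell_vertices_def)

lemma P1: assumes "k \<ge> 2" shows "P k (Suc 0) = (\<lambda>a. ([a],[Suc a])) ` {..k-2}"
proof (intro set_eqI iffI)
  fix x assume "x \<in> P k (Suc 0)"
  then obtain a b where "x = ([a],[b])" "st k [a] [b]"
    by (auto simp: P_def pell_vertices_def length_Suc_conv)
  then show "x \<in> (\<lambda>a. ([a],[Suc a])) ` {..k-2}" by auto
next
  fix x assume "x \<in> (\<lambda>a. ([a],[Suc a])) ` {..k-2}"
  then show "x \<in> P k (Suc 0)" using assms by (auto simp: P_def pell_vertices_def)
qed

lemma P_finite: "finite (P k n)"
proof -
  have "P k n \<subseteq> pell_vertices n k \<times> pell_vertices n k" by (auto simp: P_def)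
  then show ?thesis using V_finite finite_subset by blast
qed

lemma PSS: assumes "k \<ge> 2" shows "P k (Suc (Suc n)) =
   (\<lambda>(a,(u,v)). (a#u, a#v)) ` ({..<k} \<times> P k (Suc n)) \<union>
   (\<lambda>(u,v). (k#k#u, k#k#v)) ` P k n \<union>
   (\<lambda>(a,w). (a#w, Suc a#w)) ` ({..k-2} \<times> pell_vertices (Suc n) k) \<union>
   (\<lambda>w. ((k-1)#(k-1)#w, k#k#w)) ` pell_vertices n k" (is "_ = ?R")
proof (intro set_eqI iffI)
  fix x assume x: "x \<in> P k (Suc (Suc n))"
  then obtain u v where uv: "x = (u,v)" "u \<in> pell_vertices (Suc (Suc n)) k"
    "v \<in> pell_vertices (Suc (Suc n)) k" "st k u v" by (auto simp: P_def)
  obtain a b w where e1: "u = a#b#w" "length w = n"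
    using len2 uv unfolding pell_vertices_def by blast
  obtain c d w' where e2: "v = c#d#w'" "length w' = n"
    using len2 uv unfolding pell_vertices_def by blast
  note e = e1 e2
  have pu: "pell_string k (a#b#w)" and pv: "pell_string k (c#d#w')"
    using uv e by (auto simp: pell_vertices_def)
  from uv e consider "a = c" "st k (b#w) (d#w')" | "c = Suc a" "a \<le> k - 2" "b#w = d#w'"
    | "a = k - 1" "c = k" "b = k - 1" "d = k" "w = w'" by auto
  then show "x \<in> ?R"
  proof cases
    case 1
    show ?thesis
    proof (cases "a < k")
      case True
      then have "(a, (b#w, d#w')) \<in> {..<k} \<times> P k (Suc n)"
        using pu pv 1 e by (auto simp: P_def pell_vertices_def)
      then have "x \<in> (\<lambda>(a,(u,v)). (a#u, a#v)) ` ({..<k} \<times> P k (Suc n))"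
        using uv e 1 by (intro image_eqI[where x="(a,(b#w,d#w'))"]) simp_all
      then show ?thesis by blast
    next
      case False
      then have "a = k" "b = k" "pell_string k w" using pu by auto
      moreover have "d = k" "pell_string k w'" using pv 1 False by (auto split: if_splits)
      ultimately have "st k w w'" using 1 assms by auto
      then have "(w, w') \<in> P k n" using e \<open>pell_string k w\<close> \<open>pell_string k w'\<close>
        by (auto simp: P_def pell_vertices_def)
      then have "x \<in> (\<lambda>(u,v). (k#k#u, k#k#v)) ` P k n"
        using uv e 1 \<open>a = k\<close> \<open>b = k\<close> \<open>d = k\<close> by (intro image_eqI[where x="(w,w')"]) simp_all
      then show ?thesis by blast
    qed
  next
    case 2
    then have "(a, b#w) \<in> {..k-2} \<times> pell_vertices (Suc n) k"
      using pu e assms by (auto simp: pell_vertices_def)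
    then have "x \<in> (\<lambda>(a,w). (a#w, Suc a#w)) ` ({..k-2} \<times> pell_vertices (Suc n) k)"
      using uv e 2 by (intro image_eqI[where x="(a,b#w)"]) simp_all
    then show ?thesis by blast
  next
    case 3
    then have "pell_string k w" using pu assms pell_tl[of "k-1" k "(k-1)#w"] pell_tl[of "k-1" k w]
      by simp
    then have "w \<in> pell_vertices n k" using e by (simp add: pell_vertices_def)
    then have "x \<in> (\<lambda>w. ((k-1)#(k-1)#w, k#k#w)) ` pell_vertices n k"
      using uv e 3 by (intro image_eqI[where x="w"]) simp_all
    then show ?thesis by blast
  qed
next
  fix x assume "x \<in> ?R"
  then show "x \<in> P k (Suc (Suc n))"
  proof (elim UnE imageE)
    fix y assume "y \<in> {..<k} \<times> P k (Suc n)" "x = (\<lambda>(a,(u,v)). (a#u, a#v)) y"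
    then obtain a u v where "x = (a#u, a#v)" "a < k" "(u,v) \<in> P k (Suc n)" by auto
    then show ?thesis by (simp add: P_def pell_vertices_def pell_cons)
  next
    fix y assume "y \<in> P k n" "x = (\<lambda>(u,v). (k#k#u, k#k#v)) y"
    then obtain u v where "x = (k#k#u, k#k#v)" "(u,v) \<in> P k n" by (cases y) auto
    then show ?thesis using assms by (simp add: P_def pell_vertices_def)
  next
    fix y assume "y \<in> {..k-2} \<times> pell_vertices (Suc n) k" "x = (\<lambda>(a,w). (a#w, Suc a#w)) y"
    then obtain a w where "x = (a#w, Suc a#w)" "a \<le> k - 2" "w \<in> pell_vertices (Suc n) k" by auto
    moreover have "a < k" "Suc a < k" using assms \<open>a \<le> k - 2\<close> by auto
    ultimately show ?thesis using assms by (simp add: P_def pell_vertices_def pell_cons)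
  next
    fix w assume "w \<in> pell_vertices n k" "x = (\<lambda>w. ((k-1)#(k-1)#w, k#k#w)) w"
    moreover have "k - 1 < k" using assms by simp
    ultimately show ?thesis using assms by (simp add: P_def pell_vertices_def pell_cons)
  qed
qed

lemma P_card_SS: assumes "k \<ge> 2" shows "card (P k (Suc (Suc n))) =
   k * card (P k (Suc n)) + card (P k n) + (k-1) * kfib k (Suc (Suc n)) + kfib k (Suc n)"
proof -
  let ?A = "(\<lambda>(a,(u,v)). (a#u, a#v)) ` ({..<k} \<times> P k (Suc n))"
  let ?B = "(\<lambda>(u,v). (k#k#u, k#k#v)) ` P k n"
  let ?C = "(\<lambda>(a,w). (a#w, Suc a#w)) ` ({..k-2} \<times> pell_vertices (Suc n) k)"
  let ?D = "(\<lambda>w. ((k-1)#(k-1)#w, k#k#w)) ` pell_vertices n k"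
  have cA: "card ?A = k * card (P k (Suc n))"
    by (subst card_image) (auto simp: inj_on_def card_cartesian_product)
  have cB: "card ?B = card (P k n)"
    by (subst card_image) (auto simp: inj_on_def)
  have ck: "card {..k-2} = k-1" using assms by simp
  have cC: "card ?C = (k-1) * kfib k (Suc (Suc n))"
    using assms ck by (subst card_image) (auto simp: inj_on_def card_cartesian_product V_card simp del: card_atMost)
  have cD: "card ?D = kfib k (Suc n)"
    by (subst card_image) (auto simp: inj_on_def V_card)
  have fA: "finite ?A" and fB: "finite ?B" and fC: "finite ?C" and fD: "finite ?D"
    by (auto simp: P_finite V_finite)
  have d1: "?A \<inter> ?B = {}" using assms by (auto simp: P_def pell_vertices_def)
  have d2: "(?A \<union> ?B) \<inter> ?C = {}" using assms by auto
  have d3: "(?A \<union> ?B \<union> ?C) \<inter> ?D = {}" using assms by auto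
  show ?thesis
    unfolding PSS[OF assms]
    apply (subst card_Un_disjoint[OF _ fD d3], simp add: fA fB fC)
    apply (subst card_Un_disjoint[OF _ fC d2], simp add: fA fB)
    apply (subst card_Un_disjoint[OF fA fB d1])
    using cA cB cC cD by simp
qed


definition g :: "nat \<Rightarrow> nat \<Rightarrow> nat" where
  "g k m = (k-1) * kfib k (Suc m) + kfib k m"

lemma kfib_diff: assumes "k \<ge> 1" shows "kfib k (Suc (Suc m)) - kfib k (Suc m) = g k m"
proof -
  obtain j where "k = Suc j" using assms by (cases k) auto
  then show ?thesis by (simp add: g_def)
qed

lemma g_SS: "g k (Suc (Suc m)) = k * g k (Suc m) + g k m"
  by (simp add: g_def algebra_simps)

definition S :: "nat \<Rightarrow> nat \<Rightarrow> nat" where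
  "S k n = (\<Sum>i = 0..n. kfib k i * g k (n - i))"

lemma S_SS: "S k (Suc (Suc n)) = k * S k (Suc n) + S k n + kfib k (Suc n) + (k-1) * kfib k (Suc (Suc n))"
proof -
  let ?A = "\<Sum>i = 0..n. kfib k i * g k (Suc n - i)"
  have "(\<Sum>i = 0..n. kfib k i * g k (Suc (Suc n) - i))
      = (\<Sum>i = 0..n. k * (kfib k i * g k (Suc n - i)) + kfib k i * g k (n - i))"
  proof (rule sum.cong)
    fix i assume "i \<in> {0..n}"
    then have "Suc (Suc n) - i = Suc (Suc (n - i))" "Suc n - i = Suc (n - i)" by auto
    then show "kfib k i * g k (Suc (Suc n) - i) = k * (kfib k i * g k (Suc n - i)) + kfib k i * g k (n - i)"
      by (simp add: g_SS algebra_simps)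
  qed simp
  also have "\<dots> = k * ?A + S k n"
    by (simp add: sum.distrib sum_distrib_left S_def)
  finally have 1: "(\<Sum>i = 0..n. kfib k i * g k (Suc (Suc n) - i)) = k * ?A + S k n" .
  have 2: "S k (Suc (Suc n)) = k * ?A + S k n + kfib k (Suc n) * g k 1 + kfib k (Suc (Suc n)) * g k 0"
    unfolding S_def by (simp add: 1[unfolded S_def])
  have 3: "S k (Suc n) = ?A + kfib k (Suc n) * g k 0"
    unfolding S_def by simp
  have g0: "g k 0 = k - 1" and g1: "g k 1 = (k-1) * k + 1" by (simp_all add: g_def)
  show ?thesis unfolding 2 3 g0 g1 by (cases k) (simp_all add: algebra_simps)
qed

lemma card_P_S: assumes "k \<ge> 2" shows "card (P k n) = S k n"
proof (induction n rule: nat_less_induct)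
  case (1 n)
  consider "n = 0" | "n = Suc 0" | m where "n = Suc (Suc m)" by (metis not0_implies_Suc)
  then show ?case
  proof cases
    case 1 then show ?thesis by (simp add: P0 S_def g_def)
  next
    case 2
    have "card (P k (Suc 0)) = k - 1" using assms
      by (simp add: P1 card_image inj_on_def)
    then show ?thesis using 2 by (simp add: S_def g_def)
  next
    case 3
    then show ?thesis using "1.IH" P_card_SS[OF assms] S_SS by (simp add: algebra_simps)
  qed
qed

theorem proposition3p2:
  fixes k n :: nat
  assumes "k \<ge> 2"
  shows "card (pell_edges n k) =
           (\<Sum>i = 0..n. kfib k i * (kfib k (n - i + 2) - kfib k (n - i + 1)))"
proof -
  have "(\<Sum>i = 0..n. kfib k i * (kfib k (n - i + 2) - kfib k (n - i + 1))) = S k n"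
    unfolding S_def
  proof (rule sum.cong)
    fix i show "kfib k i * (kfib k (n - i + 2) - kfib k (n - i + 1)) = kfib k i * g k (n - i)"
      using kfib_diff[of k "n - i"] assms by (simp add: numeral_2_eq_2)
  qed simp
  then show ?thesis using edges_P[of k n] card_P_S[OF assms] assms by simp
qed

end
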